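(* In the multi-agent combinatorial-actions contract model (described in the context), suppose the reward function $f$ is submodular. Let $\boldsymbol{\alpha}\in\mathbb{R}_{\ge0}^A$ be a contract and let $S\subseteq T$ be subset-stable with respect to $\boldsymbol{\alpha}$, such that $S\cap T_i=\emptyset$ for every agent $i$ with $\alpha_i=0$. Then every pure Nash equilibrium $S^\dagger$ with respect to the contract $2\boldsymbol{\alpha}$ satisfies $f(S^\dagger)\ge\frac12f(S)$.
   Context: Model: principal and agents $A=[n]$; each agent $i$ has a finite action set $T_i$ (pairwise disjoint), $T=\bigsqcup_iT_i$, costs $c_j\ge0$, $c(S_i)=\sum_{j\in S_i}c_j$. Reward $f:2^T\to[0,1]$ monotone, $f(\emptyset)=0$; submodular means $f(S'\cup\{a\})-f(S')\ge f(S\cup\{a\})-f(S)$ for $S'\subseteq S$, $a\notin S$. For a profile $S\subseteq T$ write $S_i=S\cap T_i$, $S_{-i}=S\setminus S_i$. Under a contract $\boldsymbol{\alpha}$ agent $i$'s utility is $\alpha_if(S)-c(S_i)$; $S$ is a pure Nash equilibrium of $\boldsymbol{\alpha}$ if for every $i$ and every $S'_i\subseteq T_i$, $\alpha_if(S_i\sqcup S_{-i})-c(S_i)\ge\alpha_if(S'_i\sqcup S_{-i})-c(S'_i)$. $S$ is subset-stable with respect to $\boldsymbol{\alpha}$ if the same inequality holds for every $i$ and every $S'_i\subseteq S_i$. *)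

theory Defs
  imports Main "HOL-Library.FuncSet" Complex_Main
begin

definition ground :: "'i set \<Rightarrow> ('i \<Rightarrow> 'a set) \<Rightarrow> 'a set" where
  "ground A T = (\<Union>i\<in>A. T i)"

definition cost :: "('a \<Rightarrow> real) \<Rightarrow> 'a set \<Rightarrow> real" where
  "cost c X = (\<Sum>j\<in>X. c j)"

definition valid_model ::
  "'i set \<Rightarrow> ('i \<Rightarrow> 'a set) \<Rightarrow> ('a \<Rightarrow> real) \<Rightarrow> ('a set \<Rightarrow> real) \<Rightarrow> bool" where
  "valid_model A T c f \<longleftrightarrow>
     finite A \<and> (\<forall>i\<in>A. finite (T i)) \<and>
     (\<forall>i\<in>A. \<forall>k\<in>A. i \<noteq> k \<longrightarrow> T i \<inter> T k = {}) \<and>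
     (\<forall>j\<in>ground A T. c j \<ge> 0) \<and>
     f {} = 0 \<and>
     (\<forall>S\<subseteq>ground A T. 0 \<le> f S \<and> f S \<le> 1) \<and>
     (\<forall>S S'. S \<subseteq> S' \<and> S' \<subseteq> ground A T \<longrightarrow> f S \<le> f S')"

definition submodular :: "'a set \<Rightarrow> ('a set \<Rightarrow> real) \<Rightarrow> bool" where
  "submodular G f \<longleftrightarrow>
     (\<forall>S' S a. S' \<subseteq> S \<and> S \<subseteq> G \<and> a \<in> G \<and> a \<notin> S \<longrightarrow>
        f (S' \<union> {a}) - f S' \<ge> f (S \<union> {a}) - f S)"

definition utility ::
  "('i \<Rightarrow> 'a set) \<Rightarrow> ('a \<Rightarrow> real) \<Rightarrow> ('a set \<Rightarrow> real) \<Rightarrow> ('i \<Rightarrow> real) \<Rightarrow> 'i \<Rightarrow> 'a set \<Rightarrow> real" where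
  "utility T c f \<alpha> i S = \<alpha> i * f S - cost c (S \<inter> T i)"

definition pure_NE ::
  "'i set \<Rightarrow> ('i \<Rightarrow> 'a set) \<Rightarrow> ('a \<Rightarrow> real) \<Rightarrow> ('a set \<Rightarrow> real) \<Rightarrow> ('i \<Rightarrow> real) \<Rightarrow> 'a set \<Rightarrow> bool" where
  "pure_NE A T c f \<alpha> S \<longleftrightarrow> S \<subseteq> ground A T \<and>
     (\<forall>i\<in>A. \<forall>Si'. Si' \<subseteq> T i \<longrightarrow>
        \<alpha> i * f (S \<inter> T i \<union> (S - T i)) - cost c (S \<inter> T i)
          \<ge> \<alpha> i * f (Si' \<union> (S - T i)) - cost c Si')"

definition subset_stable ::
  "'i set \<Rightarrow> ('i \<Rightarrow> 'a set) \<Rightarrow> ('a \<Rightarrow> real) \<Rightarrow> ('a set \<Rightarrow> real) \<Rightarrow> ('i \<Rightarrow> real) \<Rightarrow> 'a set \<Rightarrow> bool" where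
  "subset_stable A T c f \<alpha> S \<longleftrightarrow> S \<subseteq> ground A T \<and>
     (\<forall>i\<in>A. \<forall>Si'. Si' \<subseteq> S \<inter> T i \<longrightarrow>
        \<alpha> i * f (S \<inter> T i \<union> (S - T i)) - cost c (S \<inter> T i)
          \<ge> \<alpha> i * f (Si' \<union> (S - T i)) - cost c Si')"

end

theory Submission
  imports Defs
begin

lemma single_marg:
  assumes sub: "submodular G f"
    and mono: "\<forall>S S'. S \<subseteq> S' \<and> S' \<subseteq> G \<longrightarrow> f S \<le> f S'"
    and "X \<subseteq> Y" "Y \<subseteq> G" "b \<in> G"
  shows "f (Y \<union> {b}) - f Y \<le> f (X \<union> {b}) - f X"
proof (cases "b \<in> Y")
  case True
  then have "Y \<union> {b} = Y" by auto
  moreover have "X \<union> {b} \<subseteq> G" using assms by auto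
  then have "f X \<le> f (X \<union> {b})" using mono by blast
  ultimately show ?thesis by simp
next
  case False
  then show ?thesis using sub assms unfolding submodular_def by blast
qed

lemma set_marg:
  assumes sub: "submodular G f"
    and mono: "\<forall>S S'. S \<subseteq> S' \<and> S' \<subseteq> G \<longrightarrow> f S \<le> f S'"
    and fin: "finite B"
  shows "B \<subseteq> G \<Longrightarrow> X \<subseteq> Y \<Longrightarrow> Y \<subseteq> G \<Longrightarrow> f (Y \<union> B) - f Y \<le> f (X \<union> B) - f X"
  using fin
proof (induction B arbitrary: X Y rule: finite_induct)
  case empty
  then show ?case by simp
next
  case (insert b B)
  have IH: "f (Y \<union> B) - f Y \<le> f (X \<union> B) - f X" using insert by auto
  have "f ((Y \<union> B) \<union> {b}) - f (Y \<union> B) \<le> f ((X \<union> B) \<union> {b}) - f (X \<union> B)"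
    by (rule single_marg[OF sub mono]) (use insert in auto)
  moreover have "Y \<union> insert b B = (Y \<union> B) \<union> {b}" "X \<union> insert b B = (X \<union> B) \<union> {b}" by auto
  ultimately show ?case using IH by simp
qed

theorem lemma2p3:
  fixes A :: "'i set" and T :: "'i \<Rightarrow> 'a set" and c :: "'a \<Rightarrow> real"
    and f :: "'a set \<Rightarrow> real" and \<alpha> :: "'i \<Rightarrow> real" and S Sd :: "'a set"
  assumes "valid_model A T c f"
    and "submodular (ground A T) f"
    and "\<forall>i\<in>A. \<alpha> i \<ge> 0"
    and "subset_stable A T c f \<alpha> S"
    and "\<forall>i\<in>A. \<alpha> i = 0 \<longrightarrow> S \<inter> T i = {}"
    and "pure_NE A T c f (\<lambda>i. 2 * \<alpha> i) Sd"
  shows "f Sd \<ge> f S / 2"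
proof -
  let ?G = "ground A T"
  have finA: "finite A" and finT: "\<And>i. i \<in> A \<Longrightarrow> finite (T i)"
    and disj: "\<And>i k. i \<in> A \<Longrightarrow> k \<in> A \<Longrightarrow> i \<noteq> k \<Longrightarrow> T i \<inter> T k = {}"
    and cpos: "\<And>j. j \<in> ?G \<Longrightarrow> c j \<ge> 0"
    and fr: "\<And>X. X \<subseteq> ?G \<Longrightarrow> 0 \<le> f X \<and> f X \<le> 1"
    and mono: "\<forall>S S'. S \<subseteq> S' \<and> S' \<subseteq> ?G \<longrightarrow> f S \<le> f S'"
    using assms(1) unfolding valid_model_def by auto
  have sub: "submodular ?G f" by fact
  have SG: "S \<subseteq> ?G" using assms(4) unfolding subset_stable_def by auto
  have SdG: "Sd \<subseteq> ?G" using assms(6) unfolding pure_NE_def by auto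
  have TG: "\<And>i. i \<in> A \<Longrightarrow> T i \<subseteq> ?G" unfolding ground_def by auto
  define a where "a i = f (Sd \<union> (S \<inter> T i)) - f Sd" for i
  define b where "b i = f S - f ((S - T i) \<union> (S \<inter> T i \<inter> Sd))" for i
  define U where "U B = (\<Union>i\<in>B. S \<inter> T i)" for B
  have per: "2 * a i \<le> b i" if iA: "i \<in> A" for i
  proof (cases "\<alpha> i = 0")
    case True
    then have "S \<inter> T i = {}" using assms(5) iA by auto
    then have "S - T i = S" by auto
    then show ?thesis unfolding a_def b_def using \<open>S \<inter> T i = {}\<close> by simp
  next
    case False
    then have apos: "\<alpha> i > 0" using assms(3) iA by force
    have fin1: "finite (Sd \<inter> T i)" "finite (S \<inter> T i - Sd)" "finite (S \<inter> T i \<inter> Sd)"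
      using finT[OF iA] by auto
    have ne: "2 * \<alpha> i * f (Sd \<inter> T i \<union> (Sd - T i)) - cost c (Sd \<inter> T i)
       \<ge> 2 * \<alpha> i * f ((Sd \<inter> T i \<union> S \<inter> T i) \<union> (Sd - T i)) - cost c (Sd \<inter> T i \<union> S \<inter> T i)"
      using assms(6) iA unfolding pure_NE_def by auto
    have e1: "Sd \<inter> T i \<union> (Sd - T i) = Sd" by auto
    have e2: "(Sd \<inter> T i \<union> S \<inter> T i) \<union> (Sd - T i) = Sd \<union> (S \<inter> T i)" by auto
    have e3: "Sd \<inter> T i \<union> S \<inter> T i = (Sd \<inter> T i) \<union> (S \<inter> T i - Sd)" by auto
    have c3: "cost c (Sd \<inter> T i \<union> S \<inter> T i) = cost c (Sd \<inter> T i) + cost c (S \<inter> T i - Sd)"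
      unfolding e3 cost_def by (rule sum.union_disjoint) (use fin1 in auto)
    have A1: "2 * \<alpha> i * a i \<le> cost c (S \<inter> T i - Sd)"
      using ne unfolding e1 e2 c3 a_def by (simp add: algebra_simps)
    have st: "\<alpha> i * f (S \<inter> T i \<union> (S - T i)) - cost c (S \<inter> T i)
       \<ge> \<alpha> i * f ((S \<inter> T i \<inter> Sd) \<union> (S - T i)) - cost c (S \<inter> T i \<inter> Sd)"
    proof -
      have "S \<inter> T i \<inter> Sd \<subseteq> S \<inter> T i" by auto
      then show ?thesis using assms(4) iA unfolding subset_stable_def by blast
    qed
    have e4: "S \<inter> T i \<union> (S - T i) = S" by auto
    have e5: "S \<inter> T i = (S \<inter> T i \<inter> Sd) \<union> (S \<inter> T i - Sd)" by auto
    have c5: "cost c (S \<inter> T i) = cost c (S \<inter> T i \<inter> Sd) + cost c (S \<inter> T i - Sd)"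
      unfolding cost_def by (subst e5, rule sum.union_disjoint) (use fin1 in auto)
    have e6: "(S \<inter> T i \<inter> Sd) \<union> (S - T i) = (S - T i) \<union> (S \<inter> T i \<inter> Sd)" by auto
    have A2: "\<alpha> i * b i \<ge> cost c (S \<inter> T i - Sd)"
      using st unfolding e4 c5 e6 b_def by (simp add: algebra_simps)
    have "\<alpha> i * (2 * a i) \<le> \<alpha> i * b i" using A1 A2 by (simp add: algebra_simps)
    then show ?thesis using apos by simp
  qed
  have L1: "B \<subseteq> A \<Longrightarrow> f (Sd \<union> U B) - f Sd \<le> (\<Sum>i\<in>B. a i)" for B
  proof (induction B rule: infinite_finite_induct)
    case (infinite B)
    then show ?case using finA finite_subset by blast
  next
    case empty
    then show ?case by (simp add: U_def)
  next
    case (insert k B)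
    have kA: "k \<in> A" using insert by auto
    have UBG: "U B \<subseteq> ?G" using SG unfolding U_def by auto
    have "f ((Sd \<union> U B) \<union> (S \<inter> T k)) - f (Sd \<union> U B) \<le> f (Sd \<union> (S \<inter> T k)) - f Sd"
      by (rule set_marg[OF sub mono]) (use finT[OF kA] SG SdG UBG in auto)
    moreover have "Sd \<union> U (insert k B) = (Sd \<union> U B) \<union> (S \<inter> T k)" unfolding U_def by auto
    ultimately show ?case using insert by (simp add: a_def)
  qed
  have L2: "B \<subseteq> A \<Longrightarrow> f ((S \<inter> Sd) \<union> U B) - f (S \<inter> Sd) \<ge> (\<Sum>i\<in>B. b i)" for B
  proof (induction B rule: infinite_finite_induct)
    case (infinite B)
    then show ?case using finA finite_subset by blast
  next
    case empty
    then show ?case by (simp add: U_def)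
  next
    case (insert k B)
    have kA: "k \<in> A" using insert by auto
    let ?W = "(S \<inter> Sd) \<union> U B"
    let ?V = "(S - T k) \<union> (S \<inter> T k \<inter> Sd)"
    have WV: "?W \<subseteq> ?V"
    proof
      fix x assume "x \<in> ?W"
      then consider "x \<in> S \<inter> Sd" | i where "i \<in> B" "x \<in> S \<inter> T i" unfolding U_def by auto
      then show "x \<in> ?V"
      proof cases
        case 1 then show ?thesis by auto
      next
        case 2
        then have "i \<noteq> k" "i \<in> A" using insert by auto
        then show ?thesis using 2 disj[OF _ kA] by auto
      qed
    qed
    have VG: "?V \<subseteq> ?G" using SG by auto
    have "f (?V \<union> (S \<inter> T k)) - f ?V \<le> f (?W \<union> (S \<inter> T k)) - f ?W"
      by (rule set_marg[OF sub mono]) (use finT[OF kA] SG VG WV in auto)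
    moreover have "?V \<union> (S \<inter> T k) = S" by auto
    moreover have "(S \<inter> Sd) \<union> U (insert k B) = ?W \<union> (S \<inter> T k)" unfolding U_def by auto
    ultimately show ?case using insert by (simp add: b_def)
  qed
  have UA: "U A = S" using SG unfolding U_def ground_def by auto
  have s1: "f (Sd \<union> S) - f Sd \<le> (\<Sum>i\<in>A. a i)" using L1[of A] UA by simp
  have s2: "f S - f (S \<inter> Sd) \<ge> (\<Sum>i\<in>A. b i)"
  proof -
    have "(S \<inter> Sd) \<union> S = S" by auto
    then show ?thesis using L2[of A] UA by simp
  qed
  have s3: "2 * (\<Sum>i\<in>A. a i) \<le> (\<Sum>i\<in>A. b i)"
  proof -
    have "2 * (\<Sum>i\<in>A. a i) = (\<Sum>i\<in>A. 2 * a i)" by (simp add: sum_distrib_left)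
    also have "\<dots> \<le> (\<Sum>i\<in>A. b i)" using per by (rule sum_mono)
    finally show ?thesis .
  qed
  have "f S \<le> f (Sd \<union> S)" using mono SG SdG by auto
  moreover have "f (S \<inter> Sd) \<ge> 0" using fr[of "S \<inter> Sd"] SG by blast
  ultimately show ?thesis using s1 s2 s3 by linarith
qed

end
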